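(* Let $\mathbf a=(a_0,\dots,a_n)$ be integers $a_i>1$. For sufficiently small $\epsilon>0$ there is a $C(L)$-equivariant Liouville homotopy between $(X^1_\epsilon,-d^{\mathbb C}\phi_0)$ and $(X^1_\epsilon,\lambda_{\mathbf a})$.
   Context: $f(\mathbf z)=\sum_k z_k^{a_k}$ on $\mathbb{C}^{n+1}$, $V_{\mathbf a}(\epsilon)=f^{-1}(\epsilon)$, $X^1_\epsilon=V_{\mathbf a}(\epsilon)\cap B(1)$ with $B(1)$ the closed unit ball. For $t\in[0,1]$ let $\phi_t(\mathbf z)=\frac18\sum_j c_j(t)|z_j|^2$ with $c_j(t)=1+t(a_j-1)$, and $d^{\mathbb C}\phi=d\phi\circ i$; thus $-d^{\mathbb C}\phi_1=\lambda_{\mathbf a}=\frac{i}{8}\sum_k a_k(z_kd\bar z_k-\bar z_kdz_k)$ (forms restricted to $X^1_\epsilon$). With $L=\mathrm{lcm}(a_j)$, $b_j=L/a_j$, $\zeta=e^{2\pi i/L}$, the group $C(L)=\langle\zeta\rangle$ acts by $z_j\mapsto\zeta^{b_j}z_j$. A $C(L)$-equivariant Liouville homotopy is a smooth family of $C(L)$-invariant 1-forms $\lambda_s$ on $X^1_\epsilon$, each making $X^1_\epsilon$ a Liouville domain, joining the two given forms. *)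

theory Defs
  imports "HOL-Analysis.Analysis"
begin

text \<open>Points of C^(n+1) are vectors of type complex^'n, with 'n a finite index type
  of cardinality n+1. Exponents: a :: 'n => nat.\<close>

fun Ck :: "nat \<Rightarrow> ('a::euclidean_space \<Rightarrow> 'b::real_normed_vector) \<Rightarrow> 'a set \<Rightarrow> bool" where
  "Ck 0 f S = continuous_on S f"
| "Ck (Suc k) f S = ((\<forall>x\<in>S. f differentiable (at x)) \<and>
      (\<forall>i\<in>Basis. Ck k (\<lambda>x. frechet_derivative f (at x) i) S))"

definition Cinf_on :: "'a::euclidean_space set \<Rightarrow> ('a \<Rightarrow> 'b::real_normed_vector) \<Rightarrow> bool" where
  "Cinf_on S f \<longleftrightarrow> open S \<and> (\<forall>k. Ck k f S)"

definition brieskorn :: "('n::finite \<Rightarrow> nat) \<Rightarrow> complex^'n \<Rightarrow> complex" where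
  "brieskorn a z = (\<Sum>k\<in>UNIV. (z$k) ^ a k)"

definition df :: "('n::finite \<Rightarrow> nat) \<Rightarrow> complex^'n \<Rightarrow> complex^'n \<Rightarrow> complex" where
  "df a z v = (\<Sum>k\<in>UNIV. of_nat (a k) * (z$k) ^ (a k - 1) * v$k)"

definition tangent :: "('n::finite \<Rightarrow> nat) \<Rightarrow> complex^'n \<Rightarrow> (complex^'n) set" where
  "tangent a z = {v. df a z v = 0}"

definition Xeps :: "('n::finite \<Rightarrow> nat) \<Rightarrow> real \<Rightarrow> (complex^'n) set" where
  "Xeps a eps = {z. brieskorn a z = complex_of_real eps \<and> norm z \<le> 1}"

text \<open>A 1-form lambda is represented by a vector field w via lambda_z(v) = w z \<bullet> v.
  Its exterior derivative (ambient, hence also after restriction to X):\<close>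
definition dform :: "('a::euclidean_space \<Rightarrow> 'a) \<Rightarrow> 'a \<Rightarrow> 'a \<Rightarrow> 'a \<Rightarrow> real" where
  "dform w z u v = frechet_derivative w (at z) u \<bullet> v - frechet_derivative w (at z) v \<bullet> u"

text \<open>(X^1_eps, lambda) is a Liouville domain: X is a manifold with boundary
  (eps regular value of f on X), d lambda restricted to TX is nondegenerate,
  and the Liouville vector field Y (iota_Y d lambda = lambda on TX) points
  strictly outward along the boundary (the unit sphere).\<close>
definition liouville_domain :: "('n::finite \<Rightarrow> nat) \<Rightarrow> real \<Rightarrow> (complex^'n \<Rightarrow> complex^'n) \<Rightarrow> bool" where
  "liouville_domain a eps w \<longleftrightarrow>
     (\<forall>z\<in>Xeps a eps. (\<exists>v. df a z v \<noteq> 0)) \<and>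
     (\<forall>z\<in>Xeps a eps. \<forall>u\<in>tangent a z.
         (\<forall>v\<in>tangent a z. dform w z u v = 0) \<longrightarrow> u = 0) \<and>
     (\<forall>z\<in>Xeps a eps. norm z = 1 \<longrightarrow>
        (\<forall>Y\<in>tangent a z. (\<forall>v\<in>tangent a z. dform w z Y v = w z \<bullet> v) \<longrightarrow> z \<bullet> Y > 0))"

definition phi :: "('n::finite \<Rightarrow> nat) \<Rightarrow> real \<Rightarrow> complex^'n \<Rightarrow> real" where
  "phi a t z = (1/8) * (\<Sum>j\<in>UNIV. (1 + t * (real (a j) - 1)) * (cmod (z$j))\<^sup>2)"

definition dC :: "(complex^'n::finite \<Rightarrow> real) \<Rightarrow> complex^'n \<Rightarrow> complex^'n \<Rightarrow> real" where
  "dC g z v = frechet_derivative g (at z) (\<chi> j. \<i> * v$j)"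

definition lambda_a :: "('n::finite \<Rightarrow> nat) \<Rightarrow> complex^'n \<Rightarrow> complex^'n \<Rightarrow> real" where
  "lambda_a a z v = Re ((\<i>/8) * (\<Sum>k\<in>UNIV. of_nat (a k) * (z$k * cnj (v$k) - cnj (z$k) * v$k)))"

definition lcmL :: "('n::finite \<Rightarrow> nat) \<Rightarrow> nat" where
  "lcmL a = Lcm (range a)"

definition act :: "('n::finite \<Rightarrow> nat) \<Rightarrow> nat \<Rightarrow> complex^'n \<Rightarrow> complex^'n" where
  "act a m z = (\<chi> j. (cis (2 * pi / real (lcmL a))) ^ (m * (lcmL a div a j)) * z$j)"

definition equivariant_liouville_homotopy ::
  "('n::finite \<Rightarrow> nat) \<Rightarrow> real \<Rightarrow> (complex^'n \<Rightarrow> complex^'n \<Rightarrow> real)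
     \<Rightarrow> (complex^'n \<Rightarrow> complex^'n \<Rightarrow> real) \<Rightarrow> bool" where
  "equivariant_liouville_homotopy a eps lam0 lam1 \<longleftrightarrow>
    (\<exists>w :: real \<Rightarrow> complex^'n \<Rightarrow> complex^'n. \<exists>W.
       {0..1} \<times> Xeps a eps \<subseteq> W \<and> Cinf_on W (\<lambda>p. w (fst p) (snd p)) \<and>
       (\<forall>s\<in>{0..1}. liouville_domain a eps (w s)) \<and>
       (\<forall>s\<in>{0..1}. \<forall>m. \<forall>z\<in>Xeps a eps. \<forall>v\<in>tangent a z.
           w s (act a m z) \<bullet> act a m v = w s z \<bullet> v) \<and>
       (\<forall>z\<in>Xeps a eps. \<forall>v\<in>tangent a z. w 0 z \<bullet> v = lam0 z v) \<and>
       (\<forall>z\<in>Xeps a eps. \<forall>v\<in>tangent a z. w 1 z \<bullet> v = lam1 z v))"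

end

theory Submission imports Defs "HOL-Computational_Algebra.Polynomial" begin

lemma has_derivative_vecI:
  fixes f :: "'a::real_normed_vector \<Rightarrow> 'b::euclidean_space^'n"
  assumes "\<And>j. ((\<lambda>x. f x $ j) has_derivative (\<lambda>h. f' h $ j)) (at a within S)"
  shows "(f has_derivative f') (at a within S)"
proof (rule iffD2[OF has_derivative_componentwise_within], rule ballI)
  fix i :: "'b^'n" assume "i \<in> Basis"
  then obtain j u where i: "i = axis j u" unfolding Basis_vec_def by blast
  have "((\<lambda>x. f x $ j \<bullet> u) has_derivative (\<lambda>x. f' x $ j \<bullet> u)) (at a within S)"
    by (rule has_derivative_inner_left[OF assms])
  then show "((\<lambda>x. f x \<bullet> i) has_derivative (\<lambda>x. f' x \<bullet> i)) (at a within S)"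
    unfolding i inner_axis .
qed


definition FF :: "('n::finite \<Rightarrow> complex) \<Rightarrow> ('n \<Rightarrow> complex) \<Rightarrow> ('n \<Rightarrow> real poly) \<Rightarrow> ('n \<Rightarrow> real poly)
   \<Rightarrow> (real \<times> (complex^'n)) \<Rightarrow> complex^'n" where
  "FF K K' P Q p = (\<chi> j. K j * of_real (poly (P j) (fst p)) * (snd p)$j + K' j * of_real (poly (Q j) (fst p)))"

lemma poly_fst_deriv:
  "((\<lambda>p::real \<times> 'b::real_normed_vector. complex_of_real (poly P (fst p))) has_derivative
     (\<lambda>h. complex_of_real (poly (pderiv P) (fst x) * fst h))) (at x)"
proof -
  have 1: "((\<lambda>t. poly P t) has_derivative (\<lambda>h. poly (pderiv P) (fst x) * h)) (at (fst x))"
    using poly_DERIV[of P "fst x"] has_field_derivative_imp_has_derivative by blast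
  have 2: "((\<lambda>p::real \<times> 'b. fst p) has_derivative (\<lambda>h. fst h)) (at x)"
    using has_derivative_fst[OF has_derivative_ident] .
  have "((\<lambda>p::real \<times> 'b. poly P (fst p)) has_derivative (\<lambda>h. poly (pderiv P) (fst x) * fst h)) (at x)"
    using has_derivative_compose[OF 2 1] .
  then show ?thesis using has_derivative_of_real by blast
qed

lemma snd_nth_deriv:
  "((\<lambda>p::real \<times> (complex^'n::finite). snd p $ j) has_derivative (\<lambda>h. snd h $ j)) (at x)"
  using bounded_linear.has_derivative[OF bounded_linear_vec_nth has_derivative_snd[OF has_derivative_ident]] .

definition FF' where
  "FF' K K' P Q x = (\<lambda>h. \<chi> j. K j * (of_real (poly (pderiv (P j)) (fst x) * fst h) * (snd x)$j
      + of_real (poly (P j) (fst x)) * (snd h)$j) + K' j * of_real (poly (pderiv (Q j)) (fst x) * fst h))"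

lemma FF_deriv:
  "(FF K K' P Q has_derivative FF' K K' P Q x) (at x)"
  unfolding FF_def
proof (rule has_derivative_vecI)
  fix j
  have a: "((\<lambda>p. complex_of_real (poly (P j) (fst p)) * snd p $ j) has_derivative
     (\<lambda>h. complex_of_real (poly (P j) (fst x)) * snd h $ j + complex_of_real (poly (pderiv (P j)) (fst x) * fst h) * snd x $ j)) (at x)"
    using has_derivative_mult[OF poly_fst_deriv snd_nth_deriv] .
  have b: "((\<lambda>p. K j * (complex_of_real (poly (P j) (fst p)) * snd p $ j) + K' j * complex_of_real (poly (Q j) (fst p))) has_derivative
     (\<lambda>h. K j * (complex_of_real (poly (P j) (fst x)) * snd h $ j + complex_of_real (poly (pderiv (P j)) (fst x) * fst h) * snd x $ j)
        + K' j * complex_of_real (poly (pderiv (Q j)) (fst x) * fst h))) (at x)"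
    by (intro has_derivative_add has_derivative_mult_right a poly_fst_deriv)
  show "((\<lambda>p. (\<chi> j. K j * complex_of_real (poly (P j) (fst p)) * snd p $ j + K' j * complex_of_real (poly (Q j) (fst p))) $ j) has_derivative
          (\<lambda>h. FF' K K' P Q x h $ j)) (at x)"
    using b by (simp add: FF'_def algebra_simps)
qed

lemma FF_fd: "frechet_derivative (FF K K' P Q) (at x) = FF' K K' P Q x"
  by (rule frechet_derivative_at[OF FF_deriv, symmetric])

lemma FF_fd1: "(\<lambda>x. frechet_derivative (FF K K' P Q) (at x) (1, 0)) = FF K K' (\<lambda>j. pderiv (P j)) (\<lambda>j. pderiv (Q j))"
  by (rule ext) (simp add: FF_fd FF'_def FF_def vec_eq_iff)

lemma FF_fd2: "(\<lambda>x. frechet_derivative (FF K K' P Q) (at x) (0, e)) = FF (\<lambda>j. 0) (\<lambda>j. K j * e $ j) P P"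
  by (rule ext) (simp add: FF_fd FF'_def FF_def vec_eq_iff)

lemma Ck_FF: "Ck k (FF K K' P Q) S"
proof (induction k arbitrary: K K' P Q)
  case 0
  show ?case
    by (simp add: continuous_at_imp_continuous_on has_derivative_continuous[OF FF_deriv])
next
  case (Suc k)
  have d: "\<forall>x\<in>S. FF K K' P Q differentiable (at x)"
    using FF_deriv unfolding differentiable_def by blast
  have b: "\<forall>i\<in>Basis. Ck k (\<lambda>x. frechet_derivative (FF K K' P Q) (at x) i) S"
  proof
    fix i :: "real \<times> (complex^'a)" assume "i \<in> Basis"
    then consider "i = (1, 0)" | e where "i = (0, e)"
      unfolding Basis_prod_def by auto
    then show "Ck k (\<lambda>x. frechet_derivative (FF K K' P Q) (at x) i) S"
    proof cases
      case 1 then show ?thesis using Suc.IH by (simp only: FF_fd1)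
    next
      case 2 then show ?thesis using Suc.IH by (simp only: FF_fd2)
    qed
  qed
  show ?case using d b by (simp only: Ck.simps)
qed

lemma Cinf_FF: "Cinf_on UNIV (FF K K' P Q)"
  by (simp add: Cinf_on_def Ck_FF)


lemma cinner_eq: "(x::complex) \<bullet> y = Re (x * cnj y)"
  by (simp add: inner_complex_def)

lemma vinner_eq: "(x::complex^'n::finite) \<bullet> y = (\<Sum>j\<in>UNIV. Re (x$j * cnj (y$j)))"
  by (simp add: inner_vec_def cinner_eq)

lemma lin_deriv:
  fixes K :: "'n::finite \<Rightarrow> complex"
  shows "((\<lambda>z::complex^'n. \<chi> j. K j * z$j) has_derivative (\<lambda>z. \<chi> j. K j * z$j)) (at x)"
proof (rule has_derivative_vecI)
  fix j
  have "((\<lambda>z::complex^'n. z $ j) has_derivative (\<lambda>z. z $ j)) (at x)"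
    using bounded_linear.has_derivative[OF bounded_linear_vec_nth has_derivative_ident] .
  then have "((\<lambda>z::complex^'n. K j * z $ j) has_derivative (\<lambda>z. K j * z $ j)) (at x)"
    by (rule has_derivative_mult_right)
  then show "((\<lambda>z::complex^'n. (\<chi> j. K j * z$j) $ j) has_derivative (\<lambda>h. (\<chi> j. K j * h$j) $ j)) (at x)"
    by simp
qed

lemma lin_fd:
  fixes K :: "'n::finite \<Rightarrow> complex"
  shows "frechet_derivative (\<lambda>z::complex^'n. \<chi> j. K j * z$j) (at x) = (\<lambda>z. \<chi> j. K j * z$j)"
  by (rule frechet_derivative_at[OF lin_deriv, symmetric])

lemma dform_lin:
  fixes c :: "'n::finite \<Rightarrow> real"
  shows "dform (\<lambda>z::complex^'n. \<chi> j. (\<i>/4 * of_real (c j)) * z$j) z y v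
     = (\<Sum>j\<in>UNIV. c j / 2 * Re (\<i> * y$j * cnj (v$j)))"
proof -
  have "dform (\<lambda>z::complex^'n. \<chi> j. (\<i>/4 * of_real (c j)) * z$j) z y v
     = (\<Sum>j\<in>UNIV. Re ((\<i>/4 * of_real (c j)) * y$j * cnj (v$j)) - Re ((\<i>/4 * of_real (c j)) * v$j * cnj (y$j)))"
    unfolding dform_def lin_fd vinner_eq by (simp add: sum_subtractf)
  also have "\<dots> = (\<Sum>j\<in>UNIV. c j / 2 * Re (\<i> * y$j * cnj (v$j)))"
    by (rule sum.cong) (simp_all add: field_simps)
  finally show ?thesis .
qed


lemma ucnj: "x * cnj x = (complex_of_real (cmod x))\<^sup>2"
  by (metis complex_norm_square of_real_power)

lemma outward_alg:
  fixes a :: "'n::finite \<Rightarrow> nat" and c :: "'n \<Rightarrow> real" and z Y :: "complex^'n"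
    and u :: "'n \<Rightarrow> complex"
  assumes u_def: "u = (\<lambda>k. of_nat (a k) * z$k ^ (a k - 1))"
    and cpos: "\<forall>k. c k > 0" and Yt: "Y \<in> tangent a z"
    and H: "\<forall>v\<in>tangent a z. dform (\<lambda>z. \<chi> j. (\<i>/4 * of_real (c j)) * z$j) z Y v
                = (\<chi> j. (\<i>/4 * of_real (c j)) * z$j) \<bullet> v"
  defines "D \<equiv> \<Sum>k\<in>UNIV. (1 / c k) * (cmod (u k))\<^sup>2"
    and "B \<equiv> \<Sum>k\<in>UNIV. complex_of_real (1 / c k) * (u k * z$k)"
    and "A \<equiv> \<Sum>k\<in>UNIV. u k * z$k"
  shows "2 * D * (z \<bullet> Y) = D * (\<Sum>k\<in>UNIV. (cmod (z$k))\<^sup>2) - Re (cnj B * A)"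
proof -
  define v' where "v' k = complex_of_real (D / c k) * z$k - B * complex_of_real (1 / c k) * cnj (u k)" for k
  define v where "v = (\<chi> k. \<i> * v' k)"
  have cnz: "c k \<noteq> 0" for k using cpos by (metis less_irrefl)
  have uv: "(\<Sum>k\<in>UNIV. u k * v' k) = 0"
  proof -
    have "(\<Sum>k\<in>UNIV. u k * v' k) = (\<Sum>k\<in>UNIV. of_real D * (of_real (1/c k) * (u k * z$k))
            - B * of_real ((1/c k) * (cmod (u k))\<^sup>2))"
    proof (rule sum.cong)
      fix k
      have "u k * v' k = of_real D * (of_real (1/c k) * (u k * z$k)) - B * of_real (1/c k) * (u k * cnj (u k))"
        unfolding v'_def by (simp add: algebra_simps)
      then show "u k * v' k = of_real D * (of_real (1/c k) * (u k * z$k)) - B * of_real ((1/c k) * (cmod (u k))\<^sup>2)"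
        by (simp add: ucnj)
    qed simp
    also have "\<dots> = of_real D * B - B * of_real D"
      by (simp only: sum_subtractf B_def D_def of_real_sum sum_distrib_left)
    finally show ?thesis by simp
  qed
  have vt: "v \<in> tangent a z"
  proof -
    have "df a z v = (\<Sum>k\<in>UNIV. \<i> * (u k * v' k))"
      unfolding df_def v_def u_def by (rule sum.cong) (simp_all add: algebra_simps)
    also have "\<dots> = 0" using uv by (simp flip: sum_distrib_left)
    finally show ?thesis by (simp add: tangent_def)
  qed
  have uY: "(\<Sum>k\<in>UNIV. u k * Y$k) = 0"
    using Yt by (simp add: tangent_def df_def u_def)
  have eq1: "(\<Sum>k\<in>UNIV. c k / 2 * Re (Y$k * cnj (v' k))) = (\<Sum>k\<in>UNIV. c k / 4 * Re (z$k * cnj (v' k)))"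
  proof -
    have "dform (\<lambda>z. \<chi> j. (\<i>/4 * of_real (c j)) * z$j) z Y v = (\<chi> j. (\<i>/4 * of_real (c j)) * z$j) \<bullet> v"
      using H vt by blast
    moreover have "dform (\<lambda>z. \<chi> j. (\<i>/4 * of_real (c j)) * z$j) z Y v = (\<Sum>k\<in>UNIV. c k / 2 * Re (Y$k * cnj (v' k)))"
      unfolding dform_lin by (rule sum.cong) (simp_all add: v_def algebra_simps)
    moreover have "(\<chi> j. (\<i>/4 * of_real (c j)) * z$j) \<bullet> v = (\<Sum>k\<in>UNIV. c k / 4 * Re (z$k * cnj (v' k)))"
      unfolding vinner_eq by (rule sum.cong) (simp_all add: v_def algebra_simps)
    ultimately show ?thesis by simp
  qed
  have s1: "(\<Sum>k\<in>UNIV. c k / 2 * Re (Y$k * cnj (v' k))) = D / 2 * Re (\<Sum>k\<in>UNIV. Y$k * cnj (z$k))"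
  proof -
    have "(\<Sum>k\<in>UNIV. c k / 2 * Re (Y$k * cnj (v' k))) = (\<Sum>k\<in>UNIV. Re (of_real D * (Y$k * cnj (z$k)) - cnj B * (u k * Y$k)) / 2)"
    proof (rule sum.cong)
      fix k
      have "of_real (c k) * (Y$k * cnj (v' k)) = of_real D * (Y$k * cnj (z$k)) - cnj B * (u k * Y$k)"
        unfolding v'_def using cnz[of k] by (simp add: field_simps flip: of_real_mult)
      then have "Re (of_real (c k) * (Y$k * cnj (v' k))) = Re (of_real D * (Y$k * cnj (z$k)) - cnj B * (u k * Y$k))"
        by simp
      then show "c k / 2 * Re (Y$k * cnj (v' k)) = Re (of_real D * (Y$k * cnj (z$k)) - cnj B * (u k * Y$k)) / 2"
        by simp
    qed simp
    also have "\<dots> = Re (\<Sum>k\<in>UNIV. of_real D * (Y$k * cnj (z$k)) - cnj B * (u k * Y$k)) / 2"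
      by (simp only: Re_sum sum_divide_distrib)
    also have "\<dots> = Re (of_real D * (\<Sum>k\<in>UNIV. Y$k * cnj (z$k)) - cnj B * (\<Sum>k\<in>UNIV. u k * Y$k)) / 2"
      by (simp only: sum_subtractf sum_distrib_left)
    also have "\<dots> = D / 2 * Re (\<Sum>k\<in>UNIV. Y$k * cnj (z$k))"
      using uY by simp
    finally show ?thesis .
  qed
  have s2: "(\<Sum>k\<in>UNIV. c k / 4 * Re (z$k * cnj (v' k))) = (D * (\<Sum>k\<in>UNIV. (cmod (z$k))\<^sup>2) - Re (cnj B * A)) / 4"
  proof -
    have "(\<Sum>k\<in>UNIV. c k / 4 * Re (z$k * cnj (v' k))) = (\<Sum>k\<in>UNIV. (D * (cmod (z$k))\<^sup>2 - Re (cnj B * (u k * z$k))) / 4)"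
    proof (rule sum.cong)
      fix k
      have "of_real (c k) * (z$k * cnj (v' k)) = of_real D * (z$k * cnj (z$k)) - cnj B * (u k * z$k)"
        unfolding v'_def using cnz[of k] by (simp add: field_simps flip: of_real_mult)
      also have "\<dots> = of_real (D * (cmod (z$k))\<^sup>2) - cnj B * (u k * z$k)"
        by (simp add: ucnj)
      finally have "Re (of_real (c k) * (z$k * cnj (v' k))) = Re (of_real (D * (cmod (z$k))\<^sup>2) - cnj B * (u k * z$k))"
        by simp
      then show "c k / 4 * Re (z$k * cnj (v' k)) = (D * (cmod (z$k))\<^sup>2 - Re (cnj B * (u k * z$k))) / 4"
        by simp
    qed simp
    also have "\<dots> = (\<Sum>k\<in>UNIV. D * (cmod (z$k))\<^sup>2 - Re (cnj B * (u k * z$k))) / 4"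
      by (simp only: sum_divide_distrib)
    also have "\<dots> = (D * (\<Sum>k\<in>UNIV. (cmod (z$k))\<^sup>2) - Re (cnj B * A)) / 4"
      by (simp only: A_def sum_subtractf sum_distrib_left flip: Re_sum)
    finally show ?thesis .
  qed
  have zY: "z \<bullet> Y = Re (\<Sum>k\<in>UNIV. Y$k * cnj (z$k))"
    unfolding vinner_eq Re_sum by (rule sum.cong) simp_all
  show ?thesis using eq1 s1 s2 zY by simp
qed


definition NN :: "('n::finite \<Rightarrow> nat) \<Rightarrow> real" where
  "NN a = real (card (UNIV :: 'n set))"
definition Mx :: "('n::finite \<Rightarrow> nat) \<Rightarrow> nat" where
  "Mx a = Max (range a)"
definition LL :: "('n::finite \<Rightarrow> nat) \<Rightarrow> real" where
  "LL a = (1 / NN a) ^ Mx a"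
definition ee :: "('n::finite \<Rightarrow> nat) \<Rightarrow> real" where
  "ee a = LL a / (NN a * real (Mx a))"

lemma NN_ge1: "NN (a::'n::finite \<Rightarrow> nat) \<ge> 1"
proof -
  have "0 < card (UNIV::'n set)" by (simp add: card_gt_0_iff)
  then show ?thesis unfolding NN_def by (metis One_nat_def Suc_leI of_nat_1 of_nat_le_iff)
qed

lemma Mx_ge: "a k \<le> Mx a"
  unfolding Mx_def by simp

lemma LL_pos: "LL a > 0" and LL_le1: "LL a \<le> 1"
  using NN_ge1[of a] unfolding LL_def by (auto simp: power_le_one)

lemma ee_pos: assumes "\<forall>k. a k > 1" shows "ee (a::'n::finite \<Rightarrow> nat) > 0"
proof -
  obtain k :: 'n where True by simp
  have "Mx a \<ge> 1" using Mx_ge[of a k] assms by (metis le_trans less_imp_le_nat)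
  then show ?thesis unfolding ee_def using LL_pos[of a] NN_ge1[of a] by simp
qed

lemma key_ineq:
  fixes a :: "'n::finite \<Rightarrow> nat" and c :: "'n \<Rightarrow> real" and z :: "complex^'n"
    and u :: "'n \<Rightarrow> complex" and eps th0 th1 :: real
  assumes u_def: "u = (\<lambda>k. of_nat (a k) * z$k ^ (a k - 1))"
    and a1: "\<forall>k. a k > 1" and zb: "brieskorn a z = complex_of_real eps"
    and zn: "(\<Sum>k\<in>UNIV. (cmod (z$k))\<^sup>2) = 1"
    and ep: "0 < eps" "eps < ee a"
    and th: "th0 \<ge> 0" "th1 \<ge> 0" "th0 + th1 > 0"
    and cth: "\<forall>k. 1 / c k = th0 + th1 / real (a k)"
  defines "D \<equiv> \<Sum>k\<in>UNIV. (1 / c k) * (cmod (u k))\<^sup>2"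
    and "B \<equiv> \<Sum>k\<in>UNIV. complex_of_real (1 / c k) * (u k * z$k)"
    and "A \<equiv> \<Sum>k\<in>UNIV. u k * z$k"
  shows "D - Re (cnj B * A) > 0"
proof -
  have apos: "0 < a k" for k using a1 by (metis less_trans zero_less_one)
  define SU where "SU = (\<Sum>k\<in>UNIV. (cmod (u k))\<^sup>2)"
  define SU2 where "SU2 = (\<Sum>k\<in>UNIV. (cmod (u k))\<^sup>2 / real (a k))"
  define N where "N = NN a"
  define M where "M = Mx a"
  have N1: "N \<ge> 1" unfolding N_def by (rule NN_ge1)
  have aM: "a k \<le> M" for k unfolding M_def by (rule Mx_ge)
  have M1: "M \<ge> 2" using aM a1 by (metis Suc_1 Suc_leI le_trans)
  have p1: "cmod (z$k) \<le> 1" for k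
  proof -
    have "(cmod (z$k))\<^sup>2 \<le> 1" unfolding zn[symmetric]
      by (rule member_le_sum) auto
    then show ?thesis by (simp add: power_le_one_iff abs_le_iff power2_le_iff_abs_le)
  qed
  obtain k0 where k0: "(cmod (z$k0))\<^sup>2 \<ge> 1 / N"
  proof (rule ccontr)
    assume "\<not> thesis"
    then have lt: "(cmod (z$k))\<^sup>2 < 1 / N" for k using that not_le by blast
    have "(\<Sum>k\<in>UNIV. (cmod (z$k))\<^sup>2) < (\<Sum>k\<in>(UNIV::'n set). 1 / N)"
      by (rule sum_strict_mono) (auto simp: lt)
    also have "\<dots> = 1" using N1 by (simp add: N_def NN_def)
    finally show False using zn by simp
  qed
  have p3: "SU2 \<ge> LL a"
  proof -
    have "(cmod (u k0))\<^sup>2 / real (a k0) = real (a k0) * ((cmod (z$k0))\<^sup>2) ^ (a k0 - 1)"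
      using a1 by (simp add: u_def norm_mult norm_power power2_eq_square power_mult_distrib field_simps flip: power_mult)
    also have "\<dots> \<ge> ((cmod (z$k0))\<^sup>2) ^ (a k0 - 1)"
      using a1[rule_format, of k0] by (simp add: mult_le_cancel_right1)
    finally have "(cmod (u k0))\<^sup>2 / real (a k0) \<ge> ((cmod (z$k0))\<^sup>2) ^ (a k0 - 1)" .
    moreover have "((cmod (z$k0))\<^sup>2) ^ (a k0 - 1) \<ge> (1/N) ^ (a k0 - 1)"
      using k0 N1 by (intro power_mono) auto
    moreover have "(1/N) ^ (a k0 - 1) \<ge> (1/N) ^ M"
      using N1 aM[of k0] by (intro power_decreasing) auto
    moreover have "SU2 \<ge> (cmod (u k0))\<^sup>2 / real (a k0)"
      unfolding SU2_def by (rule member_le_sum) auto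
    ultimately show ?thesis unfolding LL_def N_def[symmetric] M_def[symmetric] by linarith
  qed
  have p4: "SU \<ge> SU2"
    unfolding SU_def SU2_def
  proof (rule sum_mono)
    fix k have "real (a k) \<ge> 1" using a1[rule_format, of k] by (simp add: less_imp_le_nat Suc_le_eq)
    then show "(cmod (u k))\<^sup>2 / real (a k) \<le> (cmod (u k))\<^sup>2"
      by (simp add: divide_le_eq mult_le_cancel_left1)
  qed
  have uz: "u k * z$k = of_nat (a k) * z$k ^ a k" for k
  proof -
    have "0 < a k" using a1[rule_format, of k] by simp
    then have "z$k ^ (a k - 1) * z$k = z$k ^ a k" by (rule power_minus_mult)
    then show ?thesis by (simp add: u_def mult.assoc)
  qed
  have p5: "cmod A \<le> N * M"
  proof -
    have "cmod A \<le> (\<Sum>k\<in>UNIV. cmod (u k * z$k))" unfolding A_def by (rule norm_sum)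
    also have "\<dots> \<le> of_nat (card (UNIV::'n set)) * real M"
    proof (rule sum_bounded_above)
      fix k
      have "cmod (u k * z$k) = real (a k) * cmod (z$k) ^ a k" by (simp add: uz norm_mult norm_power)
      also have "\<dots> \<le> real (a k) * 1" using p1[of k] by (intro mult_left_mono power_le_one) auto
      also have "\<dots> \<le> real M" using aM[of k] by simp
      finally show "cmod (u k * z$k) \<le> real M" .
    qed
    finally show ?thesis by (simp add: N_def NN_def)
  qed
  have p6: "(\<Sum>k\<in>UNIV. u k * z$k / of_nat (a k)) = of_real eps"
  proof -
    have "(\<Sum>k\<in>UNIV. u k * z$k / of_nat (a k)) = brieskorn a z"
      unfolding brieskorn_def by (rule sum.cong) (use apos in \<open>auto simp: uz\<close>)
    then show ?thesis using zb by simp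
  qed
  have CS: "(\<Sum>k\<in>UNIV. cmod (u k) * cmod (z$k)) \<le> sqrt SU"
  proof (rule real_le_rsqrt)
    have "(\<Sum>k\<in>UNIV. cmod (u k) * cmod (z$k))\<^sup>2 \<le> (\<Sum>k\<in>UNIV. (cmod (u k))\<^sup>2) * (\<Sum>k\<in>UNIV. (cmod (z$k))\<^sup>2)"
      by (rule Cauchy_Schwarz_ineq_sum)
    then show "(\<Sum>k\<in>UNIV. cmod (u k) * cmod (z$k))\<^sup>2 \<le> SU" using zn by (simp add: SU_def)
  qed
  have p7: "cmod (A - of_real eps) \<le> (1 - 1 / real M) * sqrt SU"
  proof -
    have "A - of_real eps = (\<Sum>k\<in>UNIV. u k * z$k * (1 - 1 / of_nat (a k)))"
      unfolding A_def p6[symmetric] by (simp add: sum_subtractf algebra_simps)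
    then have "cmod (A - of_real eps) \<le> (\<Sum>k\<in>UNIV. cmod (u k * z$k * (1 - 1 / of_nat (a k))))"
      by (simp add: norm_sum)
    also have "\<dots> \<le> (\<Sum>k\<in>UNIV. (1 - 1 / real M) * (cmod (u k) * cmod (z$k)))"
    proof (rule sum_mono)
      fix k
      have ak: "real (a k) \<ge> 1" using a1[rule_format, of k] by simp
      have e: "(1 - 1 / of_nat (a k) :: complex) = of_real (1 - 1 / real (a k))" by simp
      have "cmod (1 - 1 / of_nat (a k) :: complex) = 1 - 1 / real (a k)"
        unfolding e norm_of_real using ak by simp
      moreover have "1 - 1 / real (a k) \<le> 1 - 1 / real M"
        using ak aM[of k] by (simp add: frac_le)
      ultimately show "cmod (u k * z$k * (1 - 1 / of_nat (a k))) \<le> (1 - 1 / real M) * (cmod (u k) * cmod (z$k))"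
        unfolding norm_mult by (metis mult.commute mult_right_mono mult_nonneg_nonneg norm_ge_zero)
    qed
    also have "\<dots> = (1 - 1 / real M) * (\<Sum>k\<in>UNIV. cmod (u k) * cmod (z$k))"
      by (simp add: sum_distrib_left)
    also have "\<dots> \<le> (1 - 1 / real M) * sqrt SU"
      using CS M1 by (intro mult_left_mono) auto
    finally show ?thesis .
  qed
  have p8: "sqrt SU \<ge> LL a"
  proof (cases "SU \<le> 1")
    case True
    have SU0: "SU \<ge> 0" using p3 p4 LL_pos[of a] by linarith
    have "SU = sqrt SU * sqrt SU" using SU0 by simp
    also have "\<dots> \<le> sqrt SU * 1" using True SU0 by (intro mult_left_mono) auto
    finally show ?thesis using p3 p4 by simp
  next
    case False
    then have "sqrt SU \<ge> 1" by simp
    then show ?thesis using LL_le1[of a] by linarith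
  qed
  have epsM: "eps * (N * M) < LL a"
    using ep(2) N1 M1 unfolding ee_def N_def[symmetric] M_def[symmetric]
    by (simp add: pos_less_divide_eq mult.commute)
  have epsM2: "eps * M < LL a"
  proof -
    have hM: "real M \<le> N * real M" using N1 by (simp add: mult_le_cancel_right1)
    have "eps * M \<le> eps * (N * M)" using ep(1) hM by (intro mult_left_mono) auto
    then show ?thesis using epsM by simp
  qed
  have I: "SU - (cmod A)\<^sup>2 > 0"
  proof -
    have "cmod A \<le> cmod (complex_of_real eps) + cmod (A - of_real eps)" by (rule norm_triangle_sub)
    also have "\<dots> \<le> eps + (1 - 1 / real M) * sqrt SU" using p7 ep(1) by simp
    finally have A1: "cmod A \<le> eps + (1 - 1 / real M) * sqrt SU" .
    have "eps * M < sqrt SU" using epsM2 p8 by linarith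
    then have "eps < sqrt SU / M" using M1 by (simp add: pos_less_divide_eq)
    then have "cmod A < sqrt SU / M + (1 - 1 / real M) * sqrt SU" using A1 by linarith
    also have "\<dots> = sqrt SU" using M1 by (simp add: field_simps)
    finally have "cmod A < sqrt SU" .
    then have "(cmod A)\<^sup>2 < (sqrt SU)\<^sup>2" by (intro power_strict_mono) auto
    also have "(sqrt SU)\<^sup>2 = SU" using p3 p4 LL_pos[of a] by simp
    finally show ?thesis by simp
  qed
  have II: "SU2 - eps * Re A > 0"
  proof -
    have "eps * Re A \<le> eps * cmod A" using ep(1) complex_Re_le_cmod by (intro mult_left_mono) auto
    also have "\<dots> \<le> eps * (N * M)" using ep(1) p5 by (intro mult_left_mono) auto
    finally show ?thesis using epsM p3 by linarith
  qed
  have Dform: "D = th0 * SU + th1 * SU2"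
  proof -
    have "D = (\<Sum>k\<in>UNIV. th0 * (cmod (u k))\<^sup>2 + th1 * ((cmod (u k))\<^sup>2 / real (a k)))"
      unfolding D_def by (rule sum.cong) (simp_all add: cth algebra_simps)
    then show ?thesis by (simp add: sum.distrib SU_def SU2_def sum_distrib_left)
  qed
  have Bform: "B = of_real th0 * A + of_real th1 * of_real eps"
  proof -
    have "B = (\<Sum>k\<in>UNIV. of_real th0 * (u k * z$k) + of_real th1 * (u k * z$k / of_nat (a k)))"
      unfolding B_def by (rule sum.cong) (simp_all add: cth algebra_simps)
    also have "\<dots> = of_real th0 * A + of_real th1 * (\<Sum>k\<in>UNIV. u k * z$k / of_nat (a k))"
      by (simp only: sum.distrib A_def sum_distrib_left)
    finally show ?thesis by (simp only: p6)
  qed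
  have ReF: "Re (cnj B * A) = th0 * (cmod A)\<^sup>2 + th1 * (eps * Re A)"
    unfolding Bform cmod_power2 by (simp add: algebra_simps power2_eq_square)
  have "D - Re (cnj B * A) = th0 * (SU - (cmod A)\<^sup>2) + th1 * (SU2 - eps * Re A)"
    unfolding Dform ReF by (simp add: algebra_simps)
  also have "\<dots> > 0"
  proof (cases "th0 > 0")
    case True
    then show ?thesis using I II th by (simp add: add_pos_nonneg)
  next
    case False
    then have "th1 > 0" using th by linarith
    then show ?thesis using I II th False by (simp add: add_nonneg_pos)
  qed
  finally show ?thesis .
qed


lemma sumsq_norm: "norm (z::complex^'n::finite) = 1 \<Longrightarrow> (\<Sum>k\<in>UNIV. (cmod (z$k))\<^sup>2) = 1"
  unfolding norm_vec_def L2_set_def by simp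

lemma LD:
  fixes a :: "'n::finite \<Rightarrow> nat" and c :: "'n \<Rightarrow> real" and eps th0 th1 :: real
  assumes a1: "\<forall>k. a k > 1" and cpos: "\<forall>k. c k > 0"
    and ep: "0 < eps" "eps < ee a"
    and th: "th0 \<ge> 0" "th1 \<ge> 0" "th0 + th1 > 0"
    and cth: "\<forall>k. 1 / c k = th0 + th1 / real (a k)"
  shows "liouville_domain a eps (\<lambda>z. \<chi> j. (\<i>/4 * complex_of_real (c j)) * z$j)"
  unfolding liouville_domain_def
proof (intro conjI ballI impI)
  fix z assume zX: "z \<in> Xeps a eps"
  then have zb: "brieskorn a z = complex_of_real eps" by (simp add: Xeps_def)
  obtain k where zk: "z$k \<noteq> 0"
  proof (rule ccontr)
    assume "\<not> thesis"
    then have "\<forall>k. z$k = 0" using that by blast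
    moreover have "\<And>k. (0::complex) ^ a k = 0" using a1 by (metis less_trans zero_less_one zero_power)
    ultimately have "brieskorn a z = 0" unfolding brieskorn_def by (intro sum.neutral ballI) simp
    then show False using zb ep(1) by simp
  qed
  have "df a z (\<chi> j. if j = k then 1 else 0) = of_nat (a k) * z$k ^ (a k - 1)"
    unfolding df_def by (simp add: if_distrib cong: if_cong)
  also have "\<dots> \<noteq> 0" using zk a1[rule_format, of k] by simp
  finally show "\<exists>v. df a z v \<noteq> 0" by blast
next
  fix z u assume zX: "z \<in> Xeps a eps" and ut: "u \<in> tangent a z"
    and H: "\<forall>v\<in>tangent a z. dform (\<lambda>z. \<chi> j. (\<i>/4 * complex_of_real (c j)) * z$j) z u v = 0"
  define v where "v = (\<chi> j. \<i> * u$j)"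
  have "df a z v = \<i> * df a z u" unfolding df_def v_def by (simp add: sum_distrib_left algebra_simps)
  then have vt: "v \<in> tangent a z" using ut by (simp add: tangent_def)
  have "dform (\<lambda>z. \<chi> j. (\<i>/4 * complex_of_real (c j)) * z$j) z u v = (\<Sum>j\<in>UNIV. c j / 2 * (cmod (u$j))\<^sup>2)"
    unfolding dform_lin v_def cmod_power2 by (rule sum.cong) (simp_all add: power2_eq_square algebra_simps)
  then have "(\<Sum>j\<in>UNIV. c j / 2 * (cmod (u$j))\<^sup>2) = 0" using H vt by simp
  moreover have "\<forall>j\<in>UNIV. 0 \<le> c j / 2 * (cmod (u$j))\<^sup>2" using cpos by (simp add: less_imp_le)
  ultimately have "\<forall>j\<in>UNIV. c j / 2 * (cmod (u$j))\<^sup>2 = 0" by (simp add: sum_nonneg_eq_0_iff)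
  then show "u = 0" using cpos by (simp add: vec_eq_iff) (metis less_irrefl)
next
  fix z Y assume zX: "z \<in> Xeps a eps" and zn: "norm z = 1" and Yt: "Y \<in> tangent a z"
    and H: "\<forall>v\<in>tangent a z. dform (\<lambda>z. \<chi> j. (\<i>/4 * complex_of_real (c j)) * z$j) z Y v
              = (\<chi> j. (\<i>/4 * complex_of_real (c j)) * z$j) \<bullet> v"
  have zb: "brieskorn a z = complex_of_real eps" using zX by (simp add: Xeps_def)
  have z1: "(\<Sum>k\<in>UNIV. (cmod (z$k))\<^sup>2) = 1" using zn by (rule sumsq_norm)
  define u where "u = (\<lambda>k. of_nat (a k) * z$k ^ (a k - 1) :: complex)"
  define D where "D = (\<Sum>k\<in>UNIV. (1 / c k) * (cmod (u k))\<^sup>2)"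
  define B where "B = (\<Sum>k\<in>UNIV. complex_of_real (1 / c k) * (u k * z$k))"
  define A where "A = (\<Sum>k\<in>UNIV. u k * z$k)"
  have eq: "2 * D * (z \<bullet> Y) = D * (\<Sum>k\<in>UNIV. (cmod (z$k))\<^sup>2) - Re (cnj B * A)"
    unfolding D_def B_def A_def by (rule outward_alg[OF u_def cpos Yt H])
  have pos: "D - Re (cnj B * A) > 0"
    unfolding D_def B_def A_def by (rule key_ineq[OF u_def a1 zb z1 ep th cth])
  have D0: "D \<ge> 0" unfolding D_def using cpos by (intro sum_nonneg) (simp add: less_imp_le)
  have "2 * D * (z \<bullet> Y) > 0" using eq pos z1 by simp
  then show "z \<bullet> Y > 0" using D0 by (simp add: zero_less_mult_iff)
qed


definition PP :: "('n::finite \<Rightarrow> nat) \<Rightarrow> real" where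
  "PP a = (\<Prod>j\<in>UNIV. real (a j))"

definition cw :: "('n::finite \<Rightarrow> nat) \<Rightarrow> 'n \<Rightarrow> real poly" where
  "cw a k = smult (real (a k)) ([:1 / PP a, 1 - 1 / PP a:] * (\<Prod>j\<in>UNIV - {k}. [:real (a j), 1 - real (a j):]))"

definition ww :: "('n::finite \<Rightarrow> nat) \<Rightarrow> real \<Rightarrow> complex^'n \<Rightarrow> complex^'n" where
  "ww a s z = (\<chi> j. (\<i>/4 * complex_of_real (poly (cw a j) s)) * z$j)"

lemma poly_cw: "poly (cw a k) s = real (a k) * (1 / PP a + s * (1 - 1 / PP a)) *
    (\<Prod>j\<in>UNIV - {k}. real (a j) + s * (1 - real (a j)))"
  by (simp add: cw_def poly_prod ring_distribs)

lemma PP_split: "PP a = real (a k) * (\<Prod>j\<in>UNIV - {k}. real (a j))"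
  unfolding PP_def by (rule prod.remove) auto

lemma cw0: assumes "\<forall>k. a k > 1" shows "poly (cw a k) 0 = 1"
proof -
  have "PP a \<ge> 1" unfolding PP_def using assms by (intro prod_ge_1) (simp add: Suc_leI less_imp_le_nat)
  then have P0: "PP a \<noteq> 0" by linarith
  have "poly (cw a k) 0 = (real (a k) * (\<Prod>j\<in>UNIV - {k}. real (a j))) / PP a"
    unfolding poly_cw by simp
  also have "\<dots> = 1" unfolding PP_split[of a k, symmetric] using P0 by simp
  finally show ?thesis .
qed

lemma cw1: "poly (cw a k) 1 = real (a k)"
  unfolding poly_cw by simp

lemma cw_struct:
  fixes a :: "'n::finite \<Rightarrow> nat"
  assumes a1: "\<forall>k. a k > 1" and s: "0 \<le> s" "s \<le> 1"
  defines "rho \<equiv> (1 / PP a + s * (1 - 1 / PP a)) * (\<Prod>j\<in>UNIV. real (a j) + s * (1 - real (a j)))"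
  shows "rho > 0" and "poly (cw a k) s > 0" and "1 / poly (cw a k) s = (1 - s) / rho + (s / rho) / real (a k)"
proof -
  have ag: "real (a j) \<ge> 1" for j using a1[rule_format, of j] by simp
  have fpos: "real (a j) + s * (1 - real (a j)) > 0" for j
  proof -
    have "real (a j) + s * (1 - real (a j)) = (1 - s) * real (a j) + s" by (simp add: algebra_simps)
    also have "\<dots> \<ge> (1 - s) * 1 + s" using ag[of j] s by (intro add_right_mono mult_left_mono) auto
    finally show ?thesis by simp
  qed
  have PP1: "PP a \<ge> 1" unfolding PP_def using ag by (intro prod_ge_1) auto
  have rpos: "1 / PP a + s * (1 - 1 / PP a) > 0"
  proof -
    have "1 / PP a > 0" using PP1 by simp
    moreover have "1 / PP a \<le> 1" using PP1 by simp
    moreover have "s * (1 - 1 / PP a) \<ge> 0" using s calculation by simp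
    ultimately show ?thesis by linarith
  qed
  have prodpos: "(\<Prod>j\<in>UNIV - {k}. real (a j) + s * (1 - real (a j))) > 0" for k
    using fpos by (intro prod_pos) auto
  show rp: "rho > 0" unfolding rho_def using rpos fpos by (intro mult_pos_pos prod_pos) auto
  show cp: "poly (cw a k) s > 0" unfolding poly_cw using ag[of k] rpos prodpos[of k] by simp
  have split: "(\<Prod>j\<in>UNIV. real (a j) + s * (1 - real (a j))) = (real (a k) + s * (1 - real (a k))) * (\<Prod>j\<in>UNIV - {k}. real (a j) + s * (1 - real (a j)))"
    by (rule prod.remove) auto
  have X: "poly (cw a k) s * (real (a k) + s * (1 - real (a k))) = real (a k) * rho"
    unfolding poly_cw rho_def split by (simp only: mult_ac)
  have "1 / poly (cw a k) s = (real (a k) + s * (1 - real (a k))) / (poly (cw a k) s * (real (a k) + s * (1 - real (a k))))"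
    using fpos[of k] by simp
  also have "\<dots> = (real (a k) + s * (1 - real (a k))) / (real (a k) * rho)"
    by (simp only: X)
  also have "\<dots> = (1 - s) / rho + (s / rho) / real (a k)"
  proof -
    have "real (a k) \<noteq> 0" using ag[of k] by linarith
    moreover have "rho \<noteq> 0" using rp by linarith
    ultimately show ?thesis by (simp add: field_simps)
  qed
  finally show "1 / poly (cw a k) s = (1 - s) / rho + (s / rho) / real (a k)" .
qed

lemma ww_FF: "(\<lambda>p. ww a (fst p) (snd p)) = FF (\<lambda>j. \<i>/4) (\<lambda>j. 0) (cw a) (\<lambda>j. 0)"
  by (rule ext) (simp add: ww_def FF_def)

lemma ww_LD:
  assumes a1: "\<forall>k. a k > 1" and s: "0 \<le> s" "s \<le> 1" and ep: "0 < eps" "eps < ee a"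
  shows "liouville_domain a eps (ww a s)"
proof -
  define rho where "rho = (1 / PP a + s * (1 - 1 / PP a)) * (\<Prod>j\<in>UNIV. real (a j) + s * (1 - real (a j)))"
  have rp: "rho > 0" unfolding rho_def by (rule cw_struct(1)[OF a1 s])
  have "liouville_domain a eps (\<lambda>z. \<chi> j. (\<i>/4 * complex_of_real (poly (cw a j) s)) * z$j)"
  proof (rule LD[OF a1 _ ep, of _ "(1 - s) / rho" "s / rho"])
    show "\<forall>k. 0 < poly (cw a k) s" using cw_struct(2)[OF a1 s] by blast
    show "0 \<le> (1 - s) / rho" using rp s by simp
    show "0 \<le> s / rho" using rp s by simp
    show "0 < (1 - s) / rho + s / rho" using rp by (simp add: add_divide_distrib[symmetric])
    show "\<forall>k. 1 / poly (cw a k) s = (1 - s) / rho + s / rho / real (a k)"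
      using cw_struct(3)[OF a1 s] unfolding rho_def by blast
  qed
  moreover have "ww a s = (\<lambda>z. \<chi> j. (\<i>/4 * complex_of_real (poly (cw a j) s)) * z$j)"
    by (rule ext) (simp add: ww_def)
  ultimately show ?thesis by simp
qed


lemma phi_deriv:
  fixes a :: "'n::finite \<Rightarrow> nat"
  shows "(phi a t has_derivative (\<lambda>h. (1/8) * (\<Sum>j\<in>UNIV. (1 + t * (real (a j) - 1)) * (z$j \<bullet> h$j + h$j \<bullet> z$j)))) (at z)"
proof -
  have e: "phi a t = (\<lambda>z. (1/8) * (\<Sum>j\<in>UNIV. (1 + t * (real (a j) - 1)) * (z$j \<bullet> z$j)))"
    by (rule ext) (simp only: phi_def power2_norm_eq_inner)
  have vn: "((\<lambda>z::complex^'n. z $ j) has_derivative (\<lambda>h. h $ j)) (at z)" for j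
    using bounded_linear.has_derivative[OF bounded_linear_vec_nth has_derivative_ident] .
  have comp: "((\<lambda>z::complex^'n. z$j \<bullet> z$j) has_derivative (\<lambda>h. z$j \<bullet> h$j + h$j \<bullet> z$j)) (at z)" for j
    by (rule has_derivative_inner[OF vn vn])
  have "((\<lambda>z::complex^'n. \<Sum>j\<in>UNIV. (1 + t * (real (a j) - 1)) * (z$j \<bullet> z$j)) has_derivative
          (\<lambda>h. \<Sum>j\<in>UNIV. (1 + t * (real (a j) - 1)) * (z$j \<bullet> h$j + h$j \<bullet> z$j))) (at z)"
    by (intro has_derivative_sum has_derivative_mult_right comp)
  then show ?thesis unfolding e by (rule has_derivative_mult_right)
qed

lemma endpoint0:
  fixes a :: "'n::finite \<Rightarrow> nat"
  assumes a1: "\<forall>k. a k > 1"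
  shows "ww a 0 z \<bullet> v = - dC (phi a 0) z v"
proof -
  have fd: "frechet_derivative (phi a 0) (at z) = (\<lambda>h. (1/8) * (\<Sum>j\<in>UNIV. (1 + 0 * (real (a j) - 1)) * (z$j \<bullet> h$j + h$j \<bullet> z$j)))"
    by (rule frechet_derivative_at[OF phi_deriv, symmetric])
  have "- dC (phi a 0) z v = (\<Sum>j\<in>UNIV. - ((1/8) * (z$j \<bullet> (\<i> * v$j) + (\<i> * v$j) \<bullet> z$j)))"
    unfolding dC_def fd by (simp add: sum_distrib_left sum_negf)
  also have "\<dots> = (\<Sum>j\<in>UNIV. Re ((\<i>/4 * complex_of_real (poly (cw a j) 0)) * z$j * cnj (v$j)))"
    by (rule sum.cong) (simp_all add: cw0[OF a1] cinner_eq algebra_simps)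
  also have "\<dots> = ww a 0 z \<bullet> v" by (simp add: ww_def vinner_eq)
  finally show ?thesis by simp
qed

lemma endpoint1:
  fixes a :: "'n::finite \<Rightarrow> nat"
  shows "ww a 1 z \<bullet> v = lambda_a a z v"
proof -
  have "lambda_a a z v = (\<Sum>k\<in>UNIV. Re (\<i>/8 * (of_nat (a k) * (z$k * cnj (v$k) - cnj (z$k) * v$k))))"
    unfolding lambda_a_def by (simp only: sum_distrib_left Re_sum)
  also have "\<dots> = (\<Sum>j\<in>UNIV. Re ((\<i>/4 * complex_of_real (poly (cw a j) 1)) * z$j * cnj (v$j)))"
    by (rule sum.cong) (simp_all add: cw1 field_simps)
  also have "\<dots> = ww a 1 z \<bullet> v" by (simp add: ww_def vinner_eq)
  finally show ?thesis by simp
qed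

lemma equivar:
  fixes a :: "'n::finite \<Rightarrow> nat"
  shows "ww a s (act a m z) \<bullet> act a m v = ww a s z \<bullet> v"
proof -
  define q where "q j = cis (2 * pi / real (lcmL a)) ^ (m * (lcmL a div a j))" for j
  have q1: "q j * cnj (q j) = 1" for j
    unfolding ucnj q_def by (simp add: norm_power)
  have "ww a s (act a m z) \<bullet> act a m v = (\<Sum>j\<in>UNIV. Re ((\<i>/4 * complex_of_real (poly (cw a j) s)) * (q j * z$j) * cnj (q j * v$j)))"
    by (simp add: ww_def act_def vinner_eq q_def)
  also have "\<dots> = (\<Sum>j\<in>UNIV. Re ((\<i>/4 * complex_of_real (poly (cw a j) s)) * z$j * cnj (v$j) * (q j * cnj (q j))))"
    by (rule sum.cong) (simp_all add: mult_ac)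
  also have "\<dots> = ww a s z \<bullet> v" by (simp add: ww_def vinner_eq q1)
  finally show ?thesis .
qed

theorem proposition6p5:
  fixes a :: "'n::finite \<Rightarrow> nat"
  assumes "\<forall>k. a k > 1"
  shows "\<exists>e0>0. \<forall>eps. 0 < eps \<and> eps < e0 \<longrightarrow>
           equivariant_liouville_homotopy a eps
             (\<lambda>z v. - dC (phi a 0) z v) (lambda_a a)"
proof (intro exI[of _ "ee a"] conjI allI impI)
  show "ee a > 0" by (rule ee_pos[OF assms])
  fix eps assume ep: "0 < eps \<and> eps < ee a"
  show "equivariant_liouville_homotopy a eps (\<lambda>z v. - dC (phi a 0) z v) (lambda_a a)"
    unfolding equivariant_liouville_homotopy_def
  proof (intro exI[of _ "ww a"] exI[of _ UNIV] conjI ballI allI)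
    show "{0..1} \<times> Xeps a eps \<subseteq> UNIV" by simp
    show "Cinf_on UNIV (\<lambda>p. ww a (fst p) (snd p))" unfolding ww_FF by (rule Cinf_FF)
    fix s :: real assume "s \<in> {0..1}"
    then show "liouville_domain a eps (ww a s)" using ww_LD[OF assms _ _ conjunct1[OF ep] conjunct2[OF ep]] by auto
  next
    fix s m z v show "ww a s (act a m z) \<bullet> act a m v = ww a s z \<bullet> v" by (rule equivar)
  next
    fix z v show "ww a 0 z \<bullet> v = - dC (phi a 0) z v" by (rule endpoint0[OF assms])
  next
    fix z v show "ww a 1 z \<bullet> v = lambda_a a z v" by (rule endpoint1)
  qed
qed

end
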